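(* Let $N\ge 1$, $Z=\{1,\dots,N\}$, and let $W=(w_{ij})$ be a symmetric nonnegative weight matrix with positive degrees $d_i=\sum_jw_{ij}$, $D=\mathrm{diag}(d_i)$, $L=D^{-p}(D-W)D^{-p}$ for some $p\in\mathbb R$, and for $\tau^2,\alpha>0$ let $C_\tau=\tau^{2\alpha}(L+\tau^2I)^{-\alpha}=(c_{ij})$ with columns $\mathbf c_j=C_\tau\mathbf e_j$. Let $Z'\subseteq Z$ with $|Z'|=J$, $y:Z'\to\{-1,+1\}$, and let $\pi:Z'\to\{1,\dots,J\}$ be a bijection. Let $C'_\tau\in\mathbb R^{J\times J}$ be defined by $(C'_\tau)_{\pi(i),\pi(j)}=c_{ij}$ for $i,j\in Z'$ (i.e. $C_\tau$ with rows and columns outside $Z'$ removed). Let $\psi$ be a continuously differentiable, symmetric, strictly log-concave probability density with full support on $\mathbb R$ and CDF $\Psi$, let $F_j(s)=y(j)\psi(sy(j))/\Psi(sy(j))$ for $j\in Z'$, and let $\mathsf J(\mathbf u)=\frac12\langle\mathbf u,C_\tau^{-1}\mathbf u\rangle-\sum_{j\in Z'}\log\Psi(u_jy(j))$ on $\mathbb R^N$. Then: (i) finding the minimizer $\mathbf u^\ast\in\mathbb R^N$ of $\mathsf J$ is equivalent to finding $\mathbf b^\ast\in\mathbb R^J$ solving $(C'_\tau)^{-1}\mathbf b^\ast=F'(\mathbf b^\ast)$, where $F'(\mathbf v)=(f_1(v_1),\dots,f_J(v_J))^T$ with $f_k(v_k)=F_{\pi^{-1}(k)}(v_k)$; (ii)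 $\mathbf b^\ast=\arg\min_{\mathbf v\in\mathbb R^J}\mathsf J'(\mathbf v)$, where $\mathsf J'(\mathbf b)=\frac12\langle\mathbf b,(C'_\tau)^{-1}\mathbf b\rangle-\sum_{j=1}^J\log\Psi\big(b_jy(\pi^{-1}(j))\big)$; (iii) $\mathbf u^\ast=\sum_{j\in Z'}\big((C'_\tau)^{-1}\mathbf b^\ast\big)_{\pi(j)}\mathbf c_j$ and $b^\ast_k=u^\ast_{\pi^{-1}(k)}$ for $k=1,\dots,J$.
   Context: $\mathbf e_j$ is the $j$-th standard basis vector of $\mathbb R^N$; $\langle\cdot,\cdot\rangle$ is the Euclidean inner product. *)

theory Defs
  imports "HOL-Analysis.Analysis"
begin

definition strictly_concave_on :: "'a::real_vector set \<Rightarrow> ('a \<Rightarrow> real) \<Rightarrow> bool" where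
  "strictly_concave_on S f \<longleftrightarrow> convex S \<and>
     (\<forall>x\<in>S. \<forall>y\<in>S. \<forall>t::real. x \<noteq> y \<and> 0 < t \<and> t < 1 \<longrightarrow>
        f ((1 - t) *\<^sub>R x + t *\<^sub>R y) > (1 - t) * f x + t * f y)"

definition diag_mat :: "('n::finite \<Rightarrow> real) \<Rightarrow> real^'n^'n" where
  "diag_mat f = (\<chi> i j. if i = j then f i else 0)"

text \<open>Real power of a symmetric matrix, defined through its spectral decomposition
  A = U diag(lambda) U^T with U orthogonal:  A^r = U diag(lambda^r) U^T.
  (Used only for symmetric positive definite A, where it is well defined.)\<close>
definition mat_powr :: "real^'n^'n \<Rightarrow> real \<Rightarrow> real^'n::finite^'n" where
  "mat_powr A r = (SOME M. \<exists>U lam. orthogonal_matrix U \<and>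
       A = U ** diag_mat lam ** transpose U \<and>
       M = U ** diag_mat (\<lambda>i. lam i powr r) ** transpose U)"

end

theory Submission
  imports Defs
begin

declare transpose_matrix_vector[simp del] vector_transpose_matrix[simp del]

lemma inner_mat_transpose:
  fixes A :: "real^'n^'m"
  shows "x \<bullet> (A *v y) = (transpose A *v x) \<bullet> y"
  by (metis dot_lmul_matrix transpose_matrix_vector)

lemma inner_sym_mat:
  fixes A :: "real^'n^'n"
  assumes "transpose A = A"
  shows "x \<bullet> (A *v y) = y \<bullet> (A *v x)"
  by (metis assms inner_commute inner_mat_transpose)

lemma sym_max_eigen:
  fixes A :: "real^'n^'n"
  assumes sym: "transpose A = A" and S: "subspace S"
    and inv: "\<forall>x\<in>S. A *v x \<in> S" and ne: "\<exists>x\<in>S. x \<noteq> 0"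
  shows "\<exists>v lam. v \<in> S \<and> norm v = 1 \<and> A *v v = lam *\<^sub>R v"
proof -
  define K where "K = S \<inter> sphere 0 1"
  have cK: "compact K" unfolding K_def
    by (metis S closed_subspace compact_Int_closed compact_sphere inf_commute)
  obtain x0 where x0: "x0 \<in> S" "x0 \<noteq> 0" using ne by blast
  have "x0 /\<^sub>R norm x0 \<in> K" unfolding K_def using x0 S
    by (simp add: subspace_scale)
  hence Kne: "K \<noteq> {}" by blast
  have cont: "continuous_on K (\<lambda>x. x \<bullet> (A *v x))"
    by (intro continuous_intros linear_continuous_on matrix_vector_mul_linear)
  obtain v where v: "v \<in> K" and vmax: "\<forall>y\<in>K. y \<bullet> (A *v y) \<le> v \<bullet> (A *v v)"
    using continuous_attains_sup[OF cK Kne cont] by blast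
  define lam where "lam = v \<bullet> (A *v v)"
  have vS: "v \<in> S" and vn: "norm v = 1" using v by (auto simp: K_def)
  have vv: "v \<bullet> v = 1" using vn by (simp add: norm_eq_1)
  have bound: "x \<bullet> (A *v x) \<le> lam * (x \<bullet> x)" if xS: "x \<in> S" for x
  proof (cases "x = 0")
    case True then show ?thesis by simp
  next
    case False
    have "x /\<^sub>R norm x \<in> K" using xS False S by (simp add: K_def subspace_scale)
    hence "(x /\<^sub>R norm x) \<bullet> (A *v (x /\<^sub>R norm x)) \<le> lam" using vmax lam_def by blast
    hence "(x \<bullet> (A *v x)) / (norm x)^2 \<le> lam"
      by (simp add: matrix_vector_mult_scaleR power2_eq_square divide_inverse ac_simps)
    moreover have "(norm x)^2 > 0" using False by simp
    ultimately show ?thesis by (simp add: divide_le_eq power2_norm_eq_inner)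
  qed
  define w where "w = A *v v - lam *\<^sub>R v"
  have wS: "w \<in> S" unfolding w_def using inv vS S by (simp add: subspace_diff subspace_scale)
  have wv: "w \<bullet> v = 0" unfolding w_def lam_def using vv
    by (simp add: inner_diff_left inner_diff_right inner_commute)
  have wAv: "w \<bullet> (A *v v) = w \<bullet> w"
  proof -
    have "A *v v = w + lam *\<^sub>R v" by (simp add: w_def)
    thus ?thesis using wv by (simp add: inner_add_right inner_commute)
  qed
  define c where "c = w \<bullet> (A *v w) - lam * (w \<bullet> w)"
  have key: "2 * t * (w \<bullet> w) + t^2 * c \<le> 0" for t
  proof -
    have "v + t *\<^sub>R w \<in> S" using vS wS S by (simp add: subspace_add subspace_scale)
    hence b: "(v + t *\<^sub>R w) \<bullet> (A *v (v + t *\<^sub>R w)) \<le> lam * ((v + t *\<^sub>R w) \<bullet> (v + t *\<^sub>R w))"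
      by (rule bound)
    have sy: "v \<bullet> (A *v w) = w \<bullet> (A *v v)" using inner_sym_mat[OF sym] by blast
    have "(v + t *\<^sub>R w) \<bullet> (A *v (v + t *\<^sub>R w)) = lam + 2 * t * (w \<bullet> w) + t^2 * (w \<bullet> (A *v w))"
      using sy wAv unfolding lam_def
      by (simp add: matrix_vector_right_distrib matrix_vector_mult_scaleR inner_add_left inner_add_right
          power2_eq_square algebra_simps inner_commute)
    moreover have "(v + t *\<^sub>R w) \<bullet> (v + t *\<^sub>R w) = 1 + t^2 * (w \<bullet> w)"
      using vv wv by (simp add: inner_add_left inner_add_right power2_eq_square inner_commute)
    ultimately show ?thesis using b unfolding c_def by (simp add: algebra_simps)
  qed
  have "w \<bullet> w = 0"
  proof (rule ccontr)
    assume "w \<bullet> w \<noteq> 0"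
    hence pos: "w \<bullet> w > 0" by (simp add: order_le_neq_trans)
    define t where "t = (w \<bullet> w) / (\<bar>c\<bar> + 1)"
    have tpos: "t > 0" using pos by (simp add: t_def)
    have k: "2 * t * (w \<bullet> w) + t^2 * c \<le> 0" by (rule key)
    have "t * c \<ge> - t * \<bar>c\<bar>" using tpos mult_left_mono[of "-c" "\<bar>c\<bar>" t] by fastforce
    have "t * \<bar>c\<bar> < w \<bullet> w"
      unfolding t_def using pos by (simp add: field_simps)
    have "t * (2 * (w \<bullet> w) + t * c) \<le> 0" using k by (simp add: power2_eq_square algebra_simps)
    hence "2 * (w \<bullet> w) + t * c \<le> 0" using tpos by (simp add: mult_le_0_iff)
    thus False using \<open>t * c \<ge> - t * \<bar>c\<bar>\<close> \<open>t * \<bar>c\<bar> < w \<bullet> w\<close> pos by linarith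
  qed
  hence "w = 0" by simp
  hence "A *v v = lam *\<^sub>R v" by (simp add: w_def)
  thus ?thesis using vS vn by blast
qed

lemma spectral_aux:
  fixes A :: "real^'n^'n" and I :: "'n set"
  assumes sym: "transpose A = A" and fin: "finite I"
  shows "\<exists>v lam. (\<forall>i\<in>I. \<forall>j\<in>I. v i \<bullet> v j = (if i = j then 1 else 0)) \<and>
                 (\<forall>i\<in>I. A *v v i = lam i *\<^sub>R v i)"
  using fin
proof (induction I rule: finite_induct)
  case empty
  then show ?case by auto
next
  case (insert i I)
  obtain v lam where orth: "\<forall>a\<in>I. \<forall>b\<in>I. v a \<bullet> v b = (if a = b then 1 else 0)"
    and eig: "\<forall>a\<in>I. A *v v a = lam a *\<^sub>R v a" using insert.IH by blast
  define S where "S = {x. \<forall>j\<in>I. v j \<bullet> x = 0}"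
  have sub: "subspace S" unfolding S_def subspace_def
    by (simp add: inner_add_right)
  have inv: "\<forall>x\<in>S. A *v x \<in> S"
  proof
    fix x assume "x \<in> S"
    { fix j assume j: "j \<in> I"
      have "v j \<bullet> (A *v x) = x \<bullet> (A *v v j)" using inner_sym_mat[OF sym] by blast
      also have "\<dots> = lam j * (v j \<bullet> x)" using eig j by (simp add: inner_commute)
      also have "\<dots> = 0" using \<open>x \<in> S\<close> j by (simp add: S_def)
      finally have "v j \<bullet> (A *v x) = 0" . }
    thus "A *v x \<in> S" by (simp add: S_def)
  qed
  have "card (insert i I) \<le> CARD('n)" using card_mono[of "UNIV::'n set" "insert i I"] by simp
  hence cI: "card I < CARD('n)" using insert by simp
  have "dim (v ` I) \<le> card (v ` I)" by (rule dim_le_card') (simp add: insert(1))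
  moreover have "card (v ` I) \<le> card I" by (rule card_image_le[OF insert(1)])
  ultimately have "dim (v ` I) < CARD('n)" using cI by linarith
  hence "dim (v ` I) < DIM(real^'n)" by simp
  then obtain a :: "real^'n" where a: "a \<noteq> 0" "span (v ` I) \<subseteq> {x. a \<bullet> x = 0}"
    using lowdim_subset_hyperplane by blast
  have "\<forall>j\<in>I. v j \<bullet> a = 0"
  proof
    fix j assume "j \<in> I"
    hence "v j \<in> span (v ` I)" by (intro span_base imageI)
    hence "a \<bullet> v j = 0" using a(2) by blast
    thus "v j \<bullet> a = 0" by (simp add: inner_commute)
  qed
  hence "a \<in> S" by (simp add: S_def)
  then obtain u mu where u: "u \<in> S" "norm u = 1" "A *v u = mu *\<^sub>R u"
    using sym_max_eigen[OF sym sub inv] a(1) by blast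
  have uu: "u \<bullet> u = 1" using u(2) by (simp add: norm_eq_1)
  have uo: "v j \<bullet> u = 0" "u \<bullet> v j = 0" if "j \<in> I" for j
    using u(1) that by (auto simp: S_def inner_commute)
  have "i \<notin> I" by fact
  have o2: "\<forall>a\<in>insert i I. \<forall>b\<in>insert i I. (v(i := u)) a \<bullet> (v(i := u)) b = (if a = b then 1 else 0)"
  proof (intro ballI)
    fix a b assume ab: "a \<in> insert i I" "b \<in> insert i I"
    show "(v(i := u)) a \<bullet> (v(i := u)) b = (if a = b then 1 else 0)"
    proof (cases "a = i")
      case True
      then show ?thesis using ab uu uo[of b] by (cases "b = i") auto
    next
      case False
      then show ?thesis using ab orth uo[of a] \<open>i \<notin> I\<close> by (cases "b = i") auto
    qed
  qed
  have e2: "\<forall>a\<in>insert i I. A *v (v(i := u)) a = (lam(i := mu)) a *\<^sub>R (v(i := u)) a"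
  proof
    fix b assume "b \<in> insert i I"
    thus "A *v (v(i := u)) b = (lam(i := mu)) b *\<^sub>R (v(i := u)) b"
      using eig u(3) \<open>i \<notin> I\<close> by (cases "b = i") auto
  qed
  show ?case using o2 e2 by blast
qed

lemma spectral_thm:
  fixes A :: "real^'n^'n"
  assumes sym: "transpose A = A"
  shows "\<exists>U lam. orthogonal_matrix U \<and> A = U ** diag_mat lam ** transpose U"
proof -
  have ex: "\<exists>(v::'n \<Rightarrow> real^'n) lam. (\<forall>i j. v i \<bullet> v j = (if i = j then 1 else 0)) \<and>
                 (\<forall>i. A *v v i = lam i *\<^sub>R v i)"
    using spectral_aux[OF sym, of UNIV] by (simp only: finite_class.finite_UNIV ball_UNIV simp_thms)
  then obtain v :: "'n \<Rightarrow> real^'n" and lam :: "'n \<Rightarrow> real" where orth: "\<forall>i j. v i \<bullet> v j = (if i = j then 1 else 0)"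
    and eig: "\<forall>i. A *v v i = lam i *\<^sub>R v i"
    by blast
  define U :: "real^'n^'n" where "U = (\<chi> r c. v c $ r)"
  have UtU: "transpose U ** U = mat 1"
  proof -
    have "(transpose U ** U) $ i $ j = mat 1 $ i $ j" for i j
      using orth[rule_format, of i j]
      by (simp add: U_def matrix_matrix_mult_def transpose_def mat_def inner_vec_def)
    thus ?thesis by (simp add: vec_eq_iff)
  qed
  hence oU: "orthogonal_matrix U" by (simp add: orthogonal_matrix)
  hence UUt: "U ** transpose U = mat 1" by (simp add: orthogonal_matrix_def)
  have AU: "A ** U = U ** diag_mat lam"
  proof -
    have "(A ** U) $ r $ c = (U ** diag_mat lam) $ r $ c" for r c
    proof -
      have "(A ** U) $ r $ c = (A *v v c) $ r"
        by (simp add: U_def matrix_matrix_mult_def matrix_vector_mult_def)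
      also have "\<dots> = lam c * v c $ r" using eig by simp
      also have "\<dots> = (U ** diag_mat lam) $ r $ c"
        by (simp add: U_def matrix_matrix_mult_def diag_mat_def if_distrib cong: if_cong)
      finally show ?thesis .
    qed
    thus ?thesis by (simp add: vec_eq_iff)
  qed
  have "A = A ** (U ** transpose U)" using UUt by simp
  also have "\<dots> = U ** diag_mat lam ** transpose U" using AU by (simp add: matrix_mul_assoc)
  finally show ?thesis using oU by blast
qed

lemma diag_mat_mult: "diag_mat f *v z = (\<chi> i. f i * z $ i)"
proof -
  have "(\<Sum>j\<in>UNIV. (if i = j then f i else 0) * z $ j) = f i * z $ i" for i
  proof -
    have "(\<Sum>j\<in>UNIV. (if i = j then f i else 0) * z $ j) = (\<Sum>j\<in>UNIV. if i = j then f i * z $ j else 0)"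
      by (rule sum.cong) auto
    also have "\<dots> = f i * z $ i" by simp
    finally show ?thesis .
  qed
  thus ?thesis by (simp add: diag_mat_def matrix_vector_mult_def vec_eq_iff)
qed

lemma diag_mat_transpose: "transpose (diag_mat f) = diag_mat f"
  by (simp add: diag_mat_def transpose_def vec_eq_iff)

lemma diag_quad_pos:
  fixes z :: "real^'n"
  assumes "\<forall>i. mu i > 0" "z \<noteq> 0"
  shows "z \<bullet> (diag_mat mu *v z) > 0"
proof -
  obtain k where k: "z $ k \<noteq> 0" using assms(2) by (metis vec_eq_iff zero_index)
  have "z \<bullet> (diag_mat mu *v z) = (\<Sum>i\<in>UNIV. mu i * (z $ i)^2)"
    by (simp add: diag_mat_mult inner_vec_def power2_eq_square ac_simps)
  also have "\<dots> > 0"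
  proof (rule sum_pos2[of UNIV k])
    show "0 < mu k * (z $ k)^2" using assms(1) k by simp
    show "\<And>i. i \<in> UNIV \<Longrightarrow> 0 \<le> mu i * (z $ i)^2" using assms(1) by (simp add: less_imp_le)
  qed auto
  finally show ?thesis .
qed

lemma orth_diag_pd:
  fixes U :: "real^'n^'n"
  assumes oU: "orthogonal_matrix U" and mu: "\<forall>i. mu i > 0"
  shows "transpose (U ** diag_mat mu ** transpose U) = U ** diag_mat mu ** transpose U"
    and "\<forall>x. x \<noteq> 0 \<longrightarrow> 0 < x \<bullet> ((U ** diag_mat mu ** transpose U) *v x)"
proof -
  show "transpose (U ** diag_mat mu ** transpose U) = U ** diag_mat mu ** transpose U"
    by (simp add: matrix_transpose_mul diag_mat_transpose matrix_mul_assoc)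
  have UUt: "U ** transpose U = mat 1" using oU by (simp add: orthogonal_matrix_def)
  show "\<forall>x. x \<noteq> 0 \<longrightarrow> 0 < x \<bullet> ((U ** diag_mat mu ** transpose U) *v x)"
  proof (intro allI impI)
    fix x :: "real^'n" assume x: "x \<noteq> 0"
    define z where "z = transpose U *v x"
    have "U *v z = (U ** transpose U) *v x" by (simp only: z_def matrix_vector_mul_assoc)
    hence "U *v z = x" using UUt by simp
    hence z0: "z \<noteq> 0" using x by auto
    have "x \<bullet> ((U ** diag_mat mu ** transpose U) *v x) = x \<bullet> (U *v (diag_mat mu *v z))"
      by (simp add: z_def matrix_vector_mul_assoc matrix_mul_assoc)
    also have "\<dots> = z \<bullet> (diag_mat mu *v z)" by (subst inner_mat_transpose) (simp only: z_def)
    finally show "0 < x \<bullet> ((U ** diag_mat mu ** transpose U) *v x)"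
      using diag_quad_pos[OF mu z0] by simp
  qed
qed

lemma mat_powr_pd:
  fixes A :: "real^'n^'n"
  assumes sym: "transpose A = A" and pd: "\<forall>x. x \<noteq> 0 \<longrightarrow> 0 < x \<bullet> (A *v x)"
  shows "transpose (mat_powr A r) = mat_powr A r \<and> (\<forall>x. x \<noteq> 0 \<longrightarrow> 0 < x \<bullet> (mat_powr A r *v x))"
proof -
  let ?P = "\<lambda>M. \<exists>U lam. orthogonal_matrix U \<and> A = U ** diag_mat lam ** transpose U \<and>
       M = U ** diag_mat (\<lambda>i. lam i powr r) ** transpose U"
  have "\<exists>M. ?P M" using spectral_thm[OF sym] by blast
  hence "?P (mat_powr A r)" unfolding mat_powr_def by (rule someI_ex)
  then obtain U lam where oU: "orthogonal_matrix U" and AU: "A = U ** diag_mat lam ** transpose U"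
    and M: "mat_powr A r = U ** diag_mat (\<lambda>i. lam i powr r) ** transpose U" by blast
  have UtU: "transpose U ** U = mat 1" using oU by (simp add: orthogonal_matrix_def)
  have lpos: "lam i > 0" for i
  proof -
    define e where "e = U *v axis i 1"
    have "transpose U *v e = (transpose U ** U) *v axis i 1" unfolding e_def by (simp only: matrix_vector_mul_assoc)
    hence "transpose U *v e = axis i 1" using UtU by simp
    have Ae: "A *v e = lam i *\<^sub>R e"
    proof -
      have "A *v e = U *v (diag_mat lam *v (transpose U *v e))" by (simp add: AU matrix_vector_mul_assoc matrix_mul_assoc)
      also have "diag_mat lam *v axis i 1 = lam i *\<^sub>R axis i 1"
        by (simp add: diag_mat_mult vec_eq_iff axis_def)
      ultimately show ?thesis using \<open>transpose U *v e = axis i 1\<close>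
        by (simp add: e_def matrix_vector_mult_scaleR)
    qed
    have ee: "e \<bullet> e = 1"
    proof -
      have "e \<bullet> e = (transpose U *v e) \<bullet> axis i 1" unfolding e_def by (simp add: inner_mat_transpose)
      thus ?thesis using \<open>transpose U *v e = axis i 1\<close> by (simp add: inner_axis_axis)
    qed
    hence "e \<noteq> 0" by auto
    hence "0 < e \<bullet> (A *v e)" using pd by blast
    thus ?thesis using Ae ee by simp
  qed
  have lpos': "\<forall>i. lam i powr r > 0"
  proof
    fix i show "lam i powr r > 0" using lpos[of i] by simp
  qed
  show ?thesis unfolding M using orth_diag_pd[OF oU lpos'] by blast
qed

lemma pd_invertible:
  fixes M :: "real^'n^'n"
  assumes pd: "\<forall>x. x \<noteq> 0 \<longrightarrow> 0 < x \<bullet> (M *v x)"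
  shows "invertible M"
proof -
  have "inj ((*v) M)"
  proof (rule injI)
    fix x y assume "M *v x = M *v y"
    hence "M *v (x - y) = 0" by (simp add: matrix_vector_mult_diff_distrib)
    hence "(x - y) \<bullet> (M *v (x - y)) = 0" by simp
    show "x = y"
    proof (rule ccontr)
      assume "x \<noteq> y"
      hence "x - y \<noteq> 0" by simp
      hence "0 < (x - y) \<bullet> (M *v (x - y))" using pd by blast
      thus False using \<open>(x - y) \<bullet> (M *v (x - y)) = 0\<close> by simp
    qed
  qed
  thus ?thesis using matrix_left_invertible_injective invertible_left_inverse by blast
qed

lemma inv_sym_pd:
  fixes M :: "real^'n^'n"
  assumes sym: "transpose M = M" and pd: "\<forall>x. x \<noteq> 0 \<longrightarrow> 0 < x \<bullet> (M *v x)"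
  shows "M ** matrix_inv M = mat 1" "matrix_inv M ** M = mat 1"
    "transpose (matrix_inv M) = matrix_inv M"
    "\<forall>x. x \<noteq> 0 \<longrightarrow> 0 < x \<bullet> (matrix_inv M *v x)"
proof -
  have inv: "invertible M" by (rule pd_invertible[OF pd])
  show l: "M ** matrix_inv M = mat 1" and r: "matrix_inv M ** M = mat 1"
    using someI_ex[of "\<lambda>A'. M ** A' = mat 1 \<and> A' ** M = mat 1"] inv
    unfolding invertible_def matrix_inv_def by auto
  let ?N = "matrix_inv M"
  have "transpose ?N ** M = mat 1"
    using arg_cong[OF l, of transpose] sym by (simp add: matrix_transpose_mul transpose_mat)
  hence "transpose ?N = transpose ?N ** (M ** ?N)" using l by simp
  also have "\<dots> = ?N" using \<open>transpose ?N ** M = mat 1\<close> by (metis matrix_mul_assoc matrix_mul_lid)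
  finally show "transpose ?N = ?N" .
  show "\<forall>x. x \<noteq> 0 \<longrightarrow> 0 < x \<bullet> (?N *v x)"
  proof (intro allI impI)
    fix x :: "real^'n" assume x: "x \<noteq> 0"
    define y where "y = ?N *v x"
    have My: "M *v y = x" using l by (simp add: y_def matrix_vector_mul_assoc)
    hence "y \<noteq> 0" using x by auto
    hence "0 < y \<bullet> (M *v y)" using pd by blast
    thus "0 < x \<bullet> (?N *v x)" using My by (simp add: y_def inner_commute)
  qed
qed

lemma transpose_add': "transpose (A + B) = transpose A + transpose (B :: real^'n^'n)"
  by (simp add: transpose_def vec_eq_iff)
lemma transpose_diff': "transpose (A - B) = transpose A - transpose (B :: real^'n^'n)"
  by (simp add: transpose_def vec_eq_iff)

lemma laplacian_psd:
  fixes W :: "real^'n^'n" and d :: "'n \<Rightarrow> real"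
  assumes W_sym: "transpose W = W" and W_nonneg: "\<forall>i j. W $ i $ j \<ge> 0"
    and d_def: "\<forall>i. d i = (\<Sum>j\<in>UNIV. W $ i $ j)"
  shows "0 \<le> y \<bullet> ((diag_mat d - W) *v y)"
proof -
  have ws: "W $ i $ j = W $ j $ i" for i j
    using arg_cong[OF W_sym, of "\<lambda>A. A $ j $ i"] by (simp add: transpose_def)
  have yD: "y \<bullet> (diag_mat d *v y) = (\<Sum>i\<in>UNIV. d i * (y $ i)^2)"
    unfolding diag_mat_mult inner_vec_def by (intro sum.cong refl) (simp add: power2_eq_square)
  have "y \<bullet> (W *v y) = (\<Sum>i\<in>UNIV. y $ i * (\<Sum>j\<in>UNIV. W $ i $ j * y $ j))"
    by (simp add: inner_vec_def matrix_vector_mult_def)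
  also have "\<dots> = (\<Sum>i\<in>UNIV. \<Sum>j\<in>UNIV. W $ i $ j * (y $ i * y $ j))"
    by (intro sum.cong refl) (simp add: sum_distrib_left mult.commute mult.left_commute)
  finally have yW: "y \<bullet> (W *v y) = (\<Sum>i\<in>UNIV. \<Sum>j\<in>UNIV. W $ i $ j * (y $ i * y $ j))" .
  have pw: "2 * (W $ i $ j * (y $ i * y $ j)) \<le> W $ i $ j * (y $ i)^2 + W $ i $ j * (y $ j)^2" for i j
  proof -
    have "2 * (y $ i * y $ j) \<le> (y $ i)^2 + (y $ j)^2"
      using sum_squares_bound[of "y $ i" "y $ j"] by (simp add: algebra_simps)
    hence "W $ i $ j * (2 * (y $ i * y $ j)) \<le> W $ i $ j * ((y $ i)^2 + (y $ j)^2)"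
      using W_nonneg by (simp add: mult_left_mono)
    thus ?thesis by (simp add: distrib_left mult.left_commute)
  qed
  have s1: "(\<Sum>i\<in>UNIV. \<Sum>j\<in>UNIV. W $ i $ j * (y $ i)^2) = (\<Sum>i\<in>UNIV. d i * (y $ i)^2)"
    using d_def by (simp add: sum_distrib_right)
  have s2: "(\<Sum>i\<in>UNIV. \<Sum>j\<in>UNIV. W $ i $ j * (y $ j)^2) = (\<Sum>i\<in>UNIV. d i * (y $ i)^2)"
  proof -
    have "(\<Sum>i\<in>UNIV. \<Sum>j\<in>UNIV. W $ i $ j * (y $ j)^2) = (\<Sum>j\<in>UNIV. \<Sum>i\<in>UNIV. W $ i $ j * (y $ j)^2)"
      by (rule sum.swap)
    also have "\<dots> = (\<Sum>j\<in>UNIV. \<Sum>i\<in>UNIV. W $ j $ i * (y $ j)^2)" by (simp only: ws)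
    also have "\<dots> = (\<Sum>i\<in>UNIV. d i * (y $ i)^2)" using d_def by (simp add: sum_distrib_right)
    finally show ?thesis .
  qed
  have "2 * (\<Sum>i\<in>UNIV. \<Sum>j\<in>UNIV. W $ i $ j * (y $ i * y $ j))
      = (\<Sum>i\<in>UNIV. \<Sum>j\<in>UNIV. 2 * (W $ i $ j * (y $ i * y $ j)))"
    by (simp add: sum_distrib_left)
  also have "\<dots> \<le> (\<Sum>i\<in>UNIV. \<Sum>j\<in>UNIV. W $ i $ j * (y $ i)^2 + W $ i $ j * (y $ j)^2)"
    by (intro sum_mono pw)
  also have "\<dots> = (\<Sum>i\<in>UNIV. \<Sum>j\<in>UNIV. W $ i $ j * (y $ i)^2) + (\<Sum>i\<in>UNIV. \<Sum>j\<in>UNIV. W $ i $ j * (y $ j)^2)"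
    by (simp only: sum.distrib)
  finally have "y \<bullet> (W *v y) \<le> y \<bullet> (diag_mat d *v y)" using yD yW s1 s2 by linarith
  thus ?thesis by (simp add: matrix_vector_mult_diff_rdistrib inner_diff_right)
qed

lemma A_sym_pd:
  fixes W :: "real^'n^'n" and d :: "'n \<Rightarrow> real"
  assumes W_sym: "transpose W = W" and W_nonneg: "\<forall>i j. W $ i $ j \<ge> 0"
    and d_def: "\<forall>i. d i = (\<Sum>j\<in>UNIV. W $ i $ j)"
    and L_def: "L = diag_mat (\<lambda>i. d i powr (- p)) ** (diag_mat d - W) ** diag_mat (\<lambda>i. d i powr (- p))"
    and tau: "tau2 > 0"
  shows "transpose (L + tau2 *\<^sub>R mat 1) = L + tau2 *\<^sub>R mat 1"
    and "\<forall>x. x \<noteq> 0 \<longrightarrow> 0 < x \<bullet> ((L + tau2 *\<^sub>R mat 1) *v x)"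
proof -
  define S where "S = diag_mat (\<lambda>i. d i powr (- p))"
  define B where "B = diag_mat d - W"
  have Bs: "transpose B = B" unfolding B_def by (simp add: transpose_diff' diag_mat_transpose W_sym)
  have Ss: "transpose S = S" unfolding S_def by (rule diag_mat_transpose)
  have Ls: "transpose L = L" unfolding L_def S_def[symmetric] B_def[symmetric]
    by (simp add: matrix_transpose_mul Bs Ss matrix_mul_assoc)
  show "transpose (L + tau2 *\<^sub>R mat 1) = L + tau2 *\<^sub>R mat 1"
    by (simp add: transpose_add' transpose_scalar Ls)
  show "\<forall>x. x \<noteq> 0 \<longrightarrow> 0 < x \<bullet> ((L + tau2 *\<^sub>R mat 1) *v x)"
  proof (intro allI impI)
    fix x :: "real^'n" assume x: "x \<noteq> 0"
    have "x \<bullet> (L *v x) = x \<bullet> (S *v (B *v (S *v x)))"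
      unfolding L_def S_def[symmetric] B_def[symmetric] by (simp add: matrix_vector_mul_assoc matrix_mul_assoc)
    also have "\<dots> = (S *v x) \<bullet> (B *v (S *v x))" by (subst inner_mat_transpose) (simp only: Ss)
    finally have "x \<bullet> (L *v x) \<ge> 0" using laplacian_psd[OF W_sym W_nonneg d_def] by (simp add: B_def)
    moreover have "x \<bullet> x > 0" using x by simp
    moreover have "x \<bullet> ((L + tau2 *\<^sub>R mat 1) *v x) = x \<bullet> (L *v x) + tau2 * (x \<bullet> x)"
      by (simp add: matrix_vector_mult_add_rdistrib scaleR_matrix_vector_assoc[symmetric] inner_add_right)
    ultimately show "0 < x \<bullet> ((L + tau2 *\<^sub>R mat 1) *v x)" using tau
      by (simp add: add_nonneg_pos)
  qed
qed

lemma has_integral_shift_UNIV: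
  fixes f :: "real \<Rightarrow> real"
  assumes nn: "\<And>x. 0 \<le> f x" and fi: "(f has_integral r) UNIV"
  shows "((\<lambda>x. f (t + x)) has_integral r) UNIV"
proof -
  have m: "f \<in> borel_measurable lebesgue" "integral\<^sup>N lebesgue f = r" "0 \<le> r"
    using fi has_integral_iff_nn_integral_lebesgue[of f r] nn by auto
  have m2: "(\<lambda>x. f (t + x)) \<in> borel_measurable lebesgue"
    using borel_measurable_affine[OF m(1), of 1 t] by simp
  have m1': "(\<lambda>x. ennreal (f x)) \<in> borel_measurable lebesgue" using m(1) by measurable
  have "integral\<^sup>N lebesgue (\<lambda>x. f (t + x)) = integral\<^sup>N lebesgue f"
    using nn_integral_real_affine_lebesgue[OF m1', of 1 t] by simp
  thus ?thesis using has_integral_iff_nn_integral_lebesgue[of "\<lambda>x. f (t + x)" r] nn m m2 by auto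
qed

context
  fixes \<psi> \<Psi> :: "real \<Rightarrow> real"
  assumes cont: "continuous_on UNIV \<psi>" and pos: "\<forall>x. \<psi> x > 0"
    and dens: "(\<psi> has_integral 1) UNIV"
    and conc: "strictly_concave_on UNIV (\<lambda>x. ln (\<psi> x))"
    and Psi_def: "\<forall>x. \<Psi> x = integral {..x} \<psi>"
begin

lemma Psi_int: "(\<psi> has_integral \<Psi> x) {..x}"
proof -
  have "\<psi> absolutely_integrable_on UNIV"
    using dens pos by (intro nonnegative_absolutely_integrable_1) (auto simp: less_imp_le)
  hence "\<psi> absolutely_integrable_on {..x}"
    by (rule set_integrable_subset) auto
  hence "\<psi> integrable_on {..x}" by (simp add: absolutely_integrable_on_def)
  thus ?thesis using Psi_def by (simp add: has_integral_integral)
qed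

lemma Psi_split: assumes "a \<le> x" shows "\<Psi> x = \<Psi> a + integral {a..x} \<psi>"
proof -
  have i2: "(\<psi> has_integral integral {a..x} \<psi>) {a..x}"
    using integrable_continuous_real[OF continuous_on_subset[OF cont subset_UNIV]] by (simp add: has_integral_integral)
  have "{..a} \<inter> {a..x} = {a}" using assms by auto
  hence neg: "negligible ({..a} \<inter> {a..x})" by simp
  have "{..a} \<union> {a..x} = {..x}" using assms by auto
  hence "(\<psi> has_integral (\<Psi> a + integral {a..x} \<psi>)) {..x}"
    using has_integral_Un[OF Psi_int[of a] i2 neg] by simp
  thus ?thesis using Psi_int[of x] has_integral_unique by blast
qed

lemma Psi_nonneg: "\<Psi> x \<ge> 0"
  using has_integral_nonneg[OF Psi_int[of x]] pos by (simp add: less_imp_le)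

lemma Psi_pos: "\<Psi> x > 0"
proof -
  have "compact {x-1..x}" "{x-1..x} \<noteq> {}" by auto
  moreover have "continuous_on {x-1..x} \<psi>" using cont continuous_on_subset by blast
  ultimately obtain m where m: "m \<in> {x-1..x}" "\<forall>t\<in>{x-1..x}. \<psi> m \<le> \<psi> t"
    using continuous_attains_inf by blast
  have i2: "(\<psi> has_integral integral {x-1..x} \<psi>) {x-1..x}"
    using integrable_continuous_real[OF continuous_on_subset[OF cont subset_UNIV]] by (simp add: has_integral_integral)
  have "((\<lambda>t. \<psi> m) has_integral \<psi> m) {x-1..x}"
    using has_integral_const_real[of "\<psi> m" "x-1" x] by simp
  hence "\<psi> m \<le> integral {x-1..x} \<psi>"
    using has_integral_le[OF _ i2, of "\<lambda>t. \<psi> m" "\<psi> m"] m(2) by auto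
  hence "integral {x-1..x} \<psi> > 0" using pos by (metis less_le_trans)
  thus ?thesis using Psi_split[of "x-1" x] Psi_nonneg[of "x-1"] by simp
qed

lemma Psi_deriv: "(\<Psi> has_real_derivative \<psi> x) (at x)"
proof -
  have "((\<lambda>u. integral {x-1..u} \<psi>) has_real_derivative \<psi> x) (at x within {x-1..x+1})"
    by (rule integral_has_real_derivative) (auto intro: continuous_on_subset[OF cont])
  hence d1: "((\<lambda>u. integral {x-1..u} \<psi>) has_real_derivative \<psi> x) (at x)"
    using at_within_interior[of x "{x-1..x+1}"] by simp
  hence d2: "((\<lambda>u. \<Psi> (x-1) + integral {x-1..u} \<psi>) has_real_derivative \<psi> x) (at x)"
    using DERIV_add[OF DERIV_const d1] by simp
  show ?thesis
  proof (rule has_field_derivative_transform_within_open[OF d2, of "{x-1<..<x+1}"])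
    fix u assume "u \<in> {x-1<..<x+1}"
    thus "\<Psi> (x - 1) + integral {x - 1..u} \<psi> = \<Psi> u" using Psi_split[of "x-1" u] by simp
  qed auto
qed

lemma h_ineq:
  assumes "a \<le> b" "b \<le> d" "a \<le> c" "c \<le> d" "a + d = b + c"
  shows "ln (\<psi> a) + ln (\<psi> d) \<le> ln (\<psi> b) + ln (\<psi> c)"
proof (cases "a = d")
  case True
  then have "b = a" "c = a" using assms by auto
  then show ?thesis using True by simp
next
  case False
  hence ad: "a < d" using assms by simp
  define h where "h = (\<lambda>x. ln (\<psi> x))"
  have cv: "h ((1 - t) *\<^sub>R a + t *\<^sub>R d) \<ge> (1 - t) * h a + t * h d" if "0 \<le> t" "t \<le> 1" for t
  proof (cases "t = 0 \<or> t = 1")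
    case True then show ?thesis by auto
  next
    case False
    have st: "\<forall>x y t. x \<noteq> y \<and> 0 < t \<and> t < 1 \<longrightarrow> (1-t) * ln (\<psi> x) + t * ln (\<psi> y) < ln (\<psi> ((1-t) *\<^sub>R x + t *\<^sub>R y))"
      using conc unfolding strictly_concave_on_def by blast
    have "0 < t" "t < 1" "a \<noteq> d" using False that ad by auto
    hence "(1-t) * ln (\<psi> a) + t * ln (\<psi> d) < ln (\<psi> ((1-t) *\<^sub>R a + t *\<^sub>R d))" using st by blast
    then show ?thesis unfolding h_def by simp
  qed
  define t where "t = (b - a) / (d - a)"
  have t01: "0 \<le> t" "t \<le> 1" using assms ad by (auto simp: t_def field_simps)
  have td: "t * (d - a) = b - a" using ad by (simp add: t_def)
  have bt: "(1 - t) *\<^sub>R a + t *\<^sub>R d = b"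
  proof -
    have "(1 - t) *\<^sub>R a + t *\<^sub>R d = a + t * (d - a)" by (simp add: algebra_simps)
    thus ?thesis using td by simp
  qed
  have ct: "(1 - (1 - t)) *\<^sub>R a + (1 - t) *\<^sub>R d = c"
  proof -
    have "(1 - (1 - t)) *\<^sub>R a + (1 - t) *\<^sub>R d = d - t * (d - a)" by (simp add: algebra_simps)
    thus ?thesis using td assms(5) by simp
  qed
  have "h b \<ge> (1 - t) * h a + t * h d" using cv[OF t01] bt by simp
  moreover have "h c \<ge> (1 - (1 - t)) * h a + (1 - t) * h d" using cv[of "1 - t"] t01 ct by simp
  ultimately show ?thesis unfolding h_def by (simp add: algebra_simps)
qed

lemma psi_mono_ratio:
  assumes "x \<le> y"
  shows "\<psi> y * \<Psi> x \<le> \<psi> x * \<Psi> y"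
proof -
  define dl where "dl = y - x"
  define gx where "gx = (\<lambda>t. if t \<in> {..x} then \<psi> t else 0)"
  define gy where "gy = (\<lambda>t. if t \<in> {..y} then \<psi> t else 0)"
  have ix: "(gx has_integral \<Psi> x) UNIV" unfolding gx_def using Psi_int[of x] has_integral_restrict_UNIV by blast
  have iy: "(gy has_integral \<Psi> y) UNIV" unfolding gy_def using Psi_int[of y] has_integral_restrict_UNIV by blast
  have gy_nn: "\<And>t. 0 \<le> gy t" unfolding gy_def using pos by (simp add: less_imp_le)
  have iy': "((\<lambda>t. gy (dl + t)) has_integral \<Psi> y) UNIV" by (rule has_integral_shift_UNIV[OF gy_nn iy])
  have l: "((\<lambda>t. \<psi> y * gx t) has_integral \<psi> y * \<Psi> x) UNIV" using has_integral_mult_right[OF ix] by simp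
  have r: "((\<lambda>t. \<psi> x * gy (dl + t)) has_integral \<psi> x * \<Psi> y) UNIV" using has_integral_mult_right[OF iy'] by simp
  have pw: "\<psi> y * gx t \<le> \<psi> x * gy (dl + t)" for t
  proof (cases "t \<le> x")
    case True
    have "ln (\<psi> t) + ln (\<psi> y) \<le> ln (\<psi> x) + ln (\<psi> (t + dl))"
      by (rule h_ineq) (use True assms in \<open>auto simp: dl_def\<close>)
    moreover have e1: "ln (\<psi> t * \<psi> y) = ln (\<psi> t) + ln (\<psi> y)" by (rule ln_mult_pos) (use pos in auto)
    moreover have e2: "ln (\<psi> x * \<psi> (t + dl)) = ln (\<psi> x) + ln (\<psi> (t + dl))" by (rule ln_mult_pos) (use pos in auto)
    ultimately have "ln (\<psi> t * \<psi> y) \<le> ln (\<psi> x * \<psi> (t + dl))" by simp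
    hence "\<psi> t * \<psi> y \<le> \<psi> x * \<psi> (t + dl)" by (metis ln_le_cancel_iff mult_pos_pos pos)
    moreover have "dl + t \<le> y" using True by (simp add: dl_def)
    ultimately show ?thesis using True by (simp add: gx_def gy_def ac_simps)
  next
    case False
    then show ?thesis using gy_nn[of "dl + t"] pos by (simp add: gx_def less_imp_le)
  qed
  show ?thesis using has_integral_le[OF l r] pw by blast
qed

lemma Psi_ratio_anti:
  assumes "u \<le> v" shows "\<psi> v / \<Psi> v \<le> \<psi> u / \<Psi> u"
  using psi_mono_ratio[OF assms] Psi_pos[of u] Psi_pos[of v]
  by (simp add: divide_simps ac_simps)

lemma lnPsi_deriv: "((\<lambda>x. ln (\<Psi> x)) has_real_derivative \<psi> x / \<Psi> x) (at x)"
  using DERIV_ln_divide[OF Psi_pos[of x]] Psi_deriv[of x] DERIV_chain2 by (fastforce simp: divide_simps)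

lemma lnPsi_tangent: "ln (\<Psi> t) \<le> ln (\<Psi> s) + \<psi> s / \<Psi> s * (t - s)"
proof -
  consider "t = s" | "s < t" | "t < s" by linarith
  then show ?thesis
  proof cases
    case 1 then show ?thesis by simp
  next
    case 2
    obtain z where z: "s < z" "z < t" "ln (\<Psi> t) - ln (\<Psi> s) = (t - s) * (\<psi> z / \<Psi> z)"
      using MVT2[OF 2, of "\<lambda>x. ln (\<Psi> x)" "\<lambda>x. \<psi> x / \<Psi> x"] lnPsi_deriv by blast
    have "\<psi> z / \<Psi> z \<le> \<psi> s / \<Psi> s" using Psi_ratio_anti z by simp
    hence "(t - s) * (\<psi> z / \<Psi> z) \<le> (t - s) * (\<psi> s / \<Psi> s)" by (rule mult_left_mono) (use 2 in auto)
    thus ?thesis using z by (simp add: ac_simps)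
  next
    case 3
    obtain z where z: "t < z" "z < s" "ln (\<Psi> s) - ln (\<Psi> t) = (s - t) * (\<psi> z / \<Psi> z)"
      using MVT2[OF 3, of "\<lambda>x. ln (\<Psi> x)" "\<lambda>x. \<psi> x / \<Psi> x"] lnPsi_deriv by blast
    have "\<psi> s / \<Psi> s \<le> \<psi> z / \<Psi> z" using Psi_ratio_anti z by simp
    hence le: "(s - t) * (\<psi> s / \<Psi> s) \<le> (s - t) * (\<psi> z / \<Psi> z)" by (rule mult_left_mono) (use 3 in auto)
    have key: "L1 \<le> L2 + A * (t - s)" if "(s - t) * A \<le> (s - t) * B" "L2 - L1 = (s - t) * B" for A B L1 L2 :: real
    proof -
      have "A * (t - s) = - ((s - t) * A)" by (simp add: algebra_simps)
      thus ?thesis using that by linarith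
    qed
    show ?thesis by (rule key[OF le z(3)])
  qed
qed

end

declare transpose_matrix_vector[simp del] vector_transpose_matrix[simp del]

lemma inner_mat_transpose':
  fixes A :: "real^'n^'m"
  shows "x \<bullet> (A *v y) = (transpose A *v x) \<bullet> y"
  by (metis dot_lmul_matrix transpose_matrix_vector)

lemma inner_sym_mat':
  fixes A :: "real^'n^'n"
  assumes "transpose A = A"
  shows "x \<bullet> (A *v y) = y \<bullet> (A *v x)"
  by (metis assms inner_commute inner_mat_transpose')

lemma quad_expand:
  fixes M :: "real^'m^'m"
  assumes "transpose M = M"
  shows "(u + w) \<bullet> (M *v (u + w)) = u \<bullet> (M *v u) + 2 * (w \<bullet> (M *v u)) + w \<bullet> (M *v w)"
proof -
  have "u \<bullet> (M *v w) = w \<bullet> (M *v u)" by (rule inner_sym_mat'[OF assms])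
  thus ?thesis by (simp add: matrix_vector_right_distrib inner_add_left inner_add_right)
qed

lemma inner_restrict_sum:
  fixes w :: "real^'m"
  shows "w \<bullet> (\<chi> i. if i \<in> K then f i else 0) = (\<Sum>k\<in>K. f k * w $ k)"
proof -
  have "w \<bullet> (\<chi> i. if i \<in> K then f i else 0) = (\<Sum>i\<in>UNIV. if i \<in> K then f i * w $ i else 0)"
    unfolding inner_vec_def by (rule sum.cong) auto
  also have "\<dots> = (\<Sum>k\<in>UNIV \<inter> K. f k * w $ k)"
    using sum.inter_restrict[of "UNIV::'m set" "\<lambda>k. f k * w $ k" K] by simp
  finally show ?thesis by simp
qed

context
  fixes M :: "real^'m^'m" and g g' :: "'m \<Rightarrow> real \<Rightarrow> real" and K :: "'m set"
    and G :: "real^'m \<Rightarrow> real"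
  assumes Msym: "transpose M = M" and Mpd: "\<forall>x. x \<noteq> 0 \<longrightarrow> 0 < x \<bullet> (M *v x)"
   and gder: "\<And>k s. (g k has_real_derivative g' k s) (at s)"
   and gtan: "\<And>k s t. g k t \<le> g k s + g' k s * (t - s)"
   and G_def: "\<And>u. G u = 1/2 * (u \<bullet> (M *v u)) - (\<Sum>k\<in>K. g k (u $ k))"
begin

lemma opt_strict:
  assumes crit: "M *v u = (\<chi> i. if i \<in> K then g' i (u $ i) else 0)" and vu: "v \<noteq> u"
  shows "G u < G v"
proof -
  define w where "w = v - u"
  have v: "v = u + w" by (simp add: w_def)
  have w0: "w \<noteq> 0" using vu by (simp add: w_def)
  have ex: "v \<bullet> (M *v v) = u \<bullet> (M *v u) + 2 * (w \<bullet> (M *v u)) + w \<bullet> (M *v w)"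
    unfolding v by (rule quad_expand[OF Msym])
  have wa: "w \<bullet> (M *v u) = (\<Sum>k\<in>K. g' k (u $ k) * w $ k)"
    unfolding crit by (rule inner_restrict_sum)
  have gs: "(\<Sum>k\<in>K. g k (v $ k)) \<le> (\<Sum>k\<in>K. g k (u $ k) + g' k (u $ k) * w $ k)"
    by (rule sum_mono) (use gtan in \<open>simp add: w_def\<close>)
  have "(\<Sum>k\<in>K. g k (u $ k) + g' k (u $ k) * w $ k) = (\<Sum>k\<in>K. g k (u $ k)) + (\<Sum>k\<in>K. g' k (u $ k) * w $ k)"
    by (rule sum.distrib)
  moreover have "0 < w \<bullet> (M *v w)" using Mpd w0 by blast
  ultimately show ?thesis using G_def[of u] G_def[of v] ex wa gs by linarith
qed

lemma opt_crit:
  "(\<forall>v. G u \<le> G v) \<longleftrightarrow> M *v u = (\<chi> i. if i \<in> K then g' i (u $ i) else 0)"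
proof
  assume c: "M *v u = (\<chi> i. if i \<in> K then g' i (u $ i) else 0)"
  show "\<forall>v. G u \<le> G v"
  proof
    fix v show "G u \<le> G v" using opt_strict[OF c, of v] by (cases "v = u") auto
  qed
next
  assume mn: "\<forall>v. G u \<le> G v"
  have "(M *v u) $ i = (if i \<in> K then g' i (u $ i) else 0)" for i
  proof -
    define e :: "real^'m" where "e = axis i 1"
    define phi where "phi = (\<lambda>t. G (u + t *\<^sub>R e))"
    have phi_eq: "phi t = 1/2 * (u \<bullet> (M *v u)) + t * (e \<bullet> (M *v u)) + t^2 / 2 * (e \<bullet> (M *v e))
                   - (\<Sum>k\<in>K. g k (u $ k + t * e $ k))" for t
    proof -
      have "(u + t *\<^sub>R e) \<bullet> (M *v (u + t *\<^sub>R e)) = u \<bullet> (M *v u) + 2 * ((t *\<^sub>R e) \<bullet> (M *v u)) + (t *\<^sub>R e) \<bullet> (M *v (t *\<^sub>R e))"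
        by (rule quad_expand[OF Msym])
      also have "\<dots> = u \<bullet> (M *v u) + 2 * t * (e \<bullet> (M *v u)) + t^2 * (e \<bullet> (M *v e))"
        by (simp add: matrix_vector_mult_scaleR power2_eq_square)
      finally show ?thesis unfolding phi_def G_def by (simp add: algebra_simps)
    qed
    have dk: "((\<lambda>t. g k (u $ k + t * e $ k)) has_real_derivative g' k (u $ k) * e $ k) (at 0)" for k
    proof -
      have d1: "((\<lambda>t. u $ k + t * e $ k) has_real_derivative e $ k) (at 0)"
        by (auto intro!: derivative_eq_intros)
      have "((\<lambda>t. g k (u $ k + t * e $ k)) has_real_derivative g' k (u $ k + 0 * e $ k) * e $ k) (at 0)"
        by (rule DERIV_chain2[OF gder d1])
      thus ?thesis by simp
    qed
    have ds: "((\<lambda>t. \<Sum>k\<in>K. g k (u $ k + t * e $ k)) has_real_derivative (\<Sum>k\<in>K. g' k (u $ k) * e $ k)) (at 0)"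
      by (rule DERIV_sum) (rule dk)
    have dq: "((\<lambda>t. 1/2 * (u \<bullet> (M *v u)) + t * (e \<bullet> (M *v u)) + t^2 / 2 * (e \<bullet> (M *v e))) has_real_derivative
               (e \<bullet> (M *v u))) (at 0)"
      by (auto intro!: derivative_eq_intros)
    have dphi: "(phi has_real_derivative (e \<bullet> (M *v u)) - (\<Sum>k\<in>K. g' k (u $ k) * e $ k)) (at 0)"
      unfolding phi_eq[abs_def] using DERIV_diff[OF dq ds] by simp
    have "\<forall>y. \<bar>0 - y\<bar> < 1 \<longrightarrow> phi 0 \<le> phi y" using mn by (simp add: phi_def)
    hence z: "(e \<bullet> (M *v u)) - (\<Sum>k\<in>K. g' k (u $ k) * e $ k) = 0"
      using DERIV_local_min[OF dphi, of 1] by simp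
    have "(\<Sum>k\<in>K. g' k (u $ k) * e $ k) = (if i \<in> K then g' i (u $ i) else 0)"
    proof -
      have "(\<Sum>k\<in>K. g' k (u $ k) * e $ k) = (\<Sum>k\<in>K. if k = i then g' k (u $ k) else 0)"
        by (rule sum.cong) (auto simp: e_def axis_def)
      also have "\<dots> = (if i \<in> K then g' i (u $ i) else 0)" by (simp add: sum.delta')
      finally show ?thesis .
    qed
    moreover have "e \<bullet> (M *v u) = (M *v u) $ i" by (simp add: e_def inner_axis')
    ultimately show ?thesis using z by simp
  qed
  thus "M *v u = (\<chi> i. if i \<in> K then g' i (u $ i) else 0)" by (simp add: vec_eq_iff)
qed

end

theorem corollary2p6:
  fixes W :: "real^'n^'n"
    and p tau2 \<alpha> :: real
    and d :: "'n \<Rightarrow> real"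
    and D L C :: "real^'n^'n"
    and Z' :: "'n set"
    and y :: "'n \<Rightarrow> real"
    and \<pi> :: "'n \<Rightarrow> 'j::finite"
    and C' :: "real^'j^'j"
    and \<psi> \<Psi> :: "real \<Rightarrow> real"
    and F :: "'n \<Rightarrow> real \<Rightarrow> real"
    and F' :: "real^'j \<Rightarrow> real^'j"
    and JJ :: "real^'n \<Rightarrow> real"
    and JJ' :: "real^'j \<Rightarrow> real"
  assumes W_sym: "transpose W = W"
    and W_nonneg: "\<forall>i j. W $ i $ j \<ge> 0"
    and d_def: "\<forall>i. d i = (\<Sum>j\<in>UNIV. W $ i $ j)"
    and d_pos: "\<forall>i. d i > 0"
    and D_def: "D = diag_mat d"
    and L_def: "L = diag_mat (\<lambda>i. d i powr (- p)) ** (D - W) ** diag_mat (\<lambda>i. d i powr (- p))"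
    and tau2_pos: "tau2 > 0"
    and alpha_pos: "\<alpha> > 0"
    and C_def: "C = (tau2 powr \<alpha>) *\<^sub>R mat_powr (L + tau2 *\<^sub>R mat 1) (- \<alpha>)"
    and card_Z': "card Z' = CARD('j)"
    and y_vals: "\<forall>j\<in>Z'. y j \<in> {-1, 1}"
    and \<pi>_bij: "bij_betw \<pi> Z' (UNIV :: 'j set)"
    and C'_def: "\<forall>i\<in>Z'. \<forall>j\<in>Z'. C' $ \<pi> i $ \<pi> j = C $ i $ j"
    and \<psi>_deriv: "\<exists>\<psi>'. continuous_on UNIV \<psi>' \<and> (\<forall>x. (\<psi> has_real_derivative \<psi>' x) (at x))"
    and \<psi>_sym: "\<forall>x. \<psi> (- x) = \<psi> x"
    and \<psi>_pos: "\<forall>x. \<psi> x > 0"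
    and \<psi>_density: "(\<psi> has_integral 1) UNIV"
    and \<psi>_logconc: "strictly_concave_on UNIV (\<lambda>x. ln (\<psi> x))"
    and \<Psi>_def: "\<forall>x. \<Psi> x = integral {..x} \<psi>"
    and F_def: "\<forall>j s. F j s = y j * \<psi> (s * y j) / \<Psi> (s * y j)"
    and F'_def: "\<forall>v. F' v = (\<chi> k. F (inv_into Z' \<pi> k) (v $ k))"
    and JJ_def: "\<forall>u. JJ u = 1/2 * (u \<bullet> (matrix_inv C *v u)) - (\<Sum>j\<in>Z'. ln (\<Psi> (u $ j * y j)))"
    and JJ'_def: "\<forall>b. JJ' b = 1/2 * (b \<bullet> (matrix_inv C' *v b))
                     - (\<Sum>k\<in>UNIV. ln (\<Psi> (b $ k * y (inv_into Z' \<pi> k))))"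
  shows
    "(\<forall>u. (\<forall>v. JJ u \<le> JJ v) \<longleftrightarrow>
          (\<exists>b. matrix_inv C' *v b = F' b \<and>
               u = (\<Sum>j\<in>Z'. (matrix_inv C' *v b) $ \<pi> j *\<^sub>R column j C))) \<and>
     (\<forall>u b. (\<forall>v. JJ u \<le> JJ v) \<and> matrix_inv C' *v b = F' b \<longrightarrow>
          u = (\<Sum>j\<in>Z'. (matrix_inv C' *v b) $ \<pi> j *\<^sub>R column j C) \<and>
          (\<forall>k. b $ k = u $ inv_into Z' \<pi> k)) \<and>
     (\<forall>b. matrix_inv C' *v b = F' b \<longleftrightarrow> (\<forall>v. JJ' b \<le> JJ' v))"
proof -
  define \<iota> where "\<iota> = inv_into Z' \<pi>"
  have bij_i: "bij_betw \<iota> UNIV Z'" unfolding \<iota>_def by (rule bij_betw_inv_into[OF \<pi>_bij])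
  have iZ: "\<iota> k \<in> Z'" for k using bij_betw_apply[OF bij_i] by blast
  have pi_i: "\<pi> (\<iota> k) = k" for k unfolding \<iota>_def using bij_betw_inv_into_right[OF \<pi>_bij] by blast
  have i_pi: "\<iota> (\<pi> i) = i" if "i \<in> Z'" for i unfolding \<iota>_def using bij_betw_inv_into_left[OF \<pi>_bij that] .
  have reidx: "(\<Sum>k\<in>UNIV. f (\<iota> k)) = (\<Sum>i\<in>Z'. f i)" for f :: "'n \<Rightarrow> real"
    using sum.reindex_bij_betw[OF bij_i, of f] .
  have sum_emb: "(\<Sum>j\<in>UNIV. (if j \<in> Z' then f j else 0)) = (\<Sum>l\<in>UNIV. f (\<iota> l))" for f :: "'n \<Rightarrow> real"
  proof -
    have "(\<Sum>j\<in>UNIV. (if j \<in> Z' then f j else 0)) = (\<Sum>j\<in>UNIV \<inter> Z'. f j)"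
      using sum.inter_restrict[of "UNIV::'n set" f Z'] by simp
    thus ?thesis using reidx[of f] by simp
  qed
  have C'C: "C' $ k $ l = C $ \<iota> k $ \<iota> l" for k l
    using C'_def iZ[of k] iZ[of l] pi_i[of k] pi_i[of l] by metis
  define A where "A = L + tau2 *\<^sub>R mat 1"
  have A_sym: "transpose A = A" and A_pd: "\<forall>x. x \<noteq> 0 \<longrightarrow> 0 < x \<bullet> (A *v x)"
    using A_sym_pd[OF W_sym W_nonneg d_def L_def[unfolded D_def] tau2_pos] by (simp_all add: A_def)
  define P where "P = mat_powr A (- \<alpha>)"
  have P_sym: "transpose P = P" and P_pd: "\<forall>x. x \<noteq> 0 \<longrightarrow> 0 < x \<bullet> (P *v x)"
    using mat_powr_pd[OF A_sym A_pd, of "- \<alpha>"] by (simp_all add: P_def)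
  have C_P: "C = (tau2 powr \<alpha>) *\<^sub>R P" by (simp add: C_def P_def A_def)
  have cpos: "tau2 powr \<alpha> > 0" using tau2_pos by simp
  have C_sym: "transpose C = C" by (simp add: C_P transpose_scalar P_sym)
  have C_pd: "\<forall>x. x \<noteq> 0 \<longrightarrow> 0 < x \<bullet> (C *v x)"
  proof (intro allI impI)
    fix x :: "real^'n" assume "x \<noteq> 0"
    hence "0 < x \<bullet> (P *v x)" using P_pd by blast
    moreover have "x \<bullet> (C *v x) = tau2 powr \<alpha> * (x \<bullet> (P *v x))"
      by (simp add: C_P scaleR_matrix_vector_assoc[symmetric])
    ultimately show "0 < x \<bullet> (C *v x)" using cpos by simp
  qed
  have Cs: "C $ i $ j = C $ j $ i" for i j
    using arg_cong[OF C_sym, of "\<lambda>X. X $ j $ i"] by (simp add: transpose_def)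
  define emb :: "real^'j \<Rightarrow> real^'n" where "emb = (\<lambda>x. \<chi> i. if i \<in> Z' then x $ \<pi> i else 0)"
  have E: "(C *v emb x) $ \<iota> k = (C' *v x) $ k" for x k
  proof -
    have "(C *v emb x) $ \<iota> k = (\<Sum>j\<in>UNIV. (if j \<in> Z' then C $ \<iota> k $ j * x $ \<pi> j else 0))"
      by (simp add: matrix_vector_mult_def emb_def if_distrib cong: if_cong)
    also have "\<dots> = (\<Sum>l\<in>UNIV. C $ \<iota> k $ \<iota> l * x $ \<pi> (\<iota> l))" by (rule sum_emb)
    also have "\<dots> = (C' *v x) $ k" by (simp add: pi_i C'C matrix_vector_mult_def)
    finally show ?thesis .
  qed
  have emb_inner: "emb x \<bullet> w = (\<Sum>l\<in>UNIV. x $ l * w $ \<iota> l)" for x w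
  proof -
    have "emb x \<bullet> w = (\<Sum>j\<in>UNIV. (if j \<in> Z' then x $ \<pi> j * w $ j else 0))"
      unfolding inner_vec_def emb_def by (rule sum.cong) auto
    also have "\<dots> = (\<Sum>l\<in>UNIV. x $ \<pi> (\<iota> l) * w $ \<iota> l)" by (rule sum_emb)
    finally show ?thesis by (simp add: pi_i)
  qed
  have C'_sym: "transpose C' = C'"
    by (simp add: vec_eq_iff transpose_def C'C Cs)
  have C'_pd: "\<forall>x. x \<noteq> 0 \<longrightarrow> 0 < x \<bullet> (C' *v x)"
  proof (intro allI impI)
    fix x :: "real^'j" assume x: "x \<noteq> 0"
    then obtain k where k: "x $ k \<noteq> 0" by (metis vec_eq_iff zero_index)
    have "emb x $ \<iota> k = x $ k" using iZ[of k] pi_i[of k] by (simp add: emb_def)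
    hence "emb x \<noteq> 0" using k by auto
    hence "0 < emb x \<bullet> (C *v emb x)" using C_pd by blast
    also have "emb x \<bullet> (C *v emb x) = x \<bullet> (C' *v x)"
      unfolding emb_inner E by (simp add: inner_vec_def)
    finally show "0 < x \<bullet> (C' *v x)" .
  qed
  define M where "M = matrix_inv C"
  define M' where "M' = matrix_inv C'"
  note Mf = inv_sym_pd[OF C_sym C_pd, folded M_def]
  note M'f = inv_sym_pd[OF C'_sym C'_pd, folded M'_def]
  obtain \<psi>' where "\<forall>x. (\<psi> has_real_derivative \<psi>' x) (at x)" using \<psi>_deriv by blast
  hence \<psi>_cont: "continuous_on UNIV \<psi>"
    by (metis DERIV_isCont continuous_at_imp_continuous_on)
  note PS = \<psi>_cont \<psi>_pos \<psi>_density \<psi>_logconc \<Psi>_def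
  define gg where "gg = (\<lambda>j s. ln (\<Psi> (s * y j)))"
  have gder: "(gg j has_real_derivative F j s) (at s)" for j s
  proof -
    have d1: "((\<lambda>s. s * y j) has_real_derivative y j) (at s)"
      by (auto intro!: derivative_eq_intros)
    have "((\<lambda>s. ln (\<Psi> (s * y j))) has_real_derivative \<psi> (s * y j) / \<Psi> (s * y j) * y j) (at s)"
      by (rule DERIV_chain2[OF lnPsi_deriv[OF PS] d1])
    thus ?thesis using F_def by (simp add: gg_def ac_simps)
  qed
  have gtan: "gg j t \<le> gg j s + F j s * (t - s)" for j s t
  proof -
    have "ln (\<Psi> (t * y j)) \<le> ln (\<Psi> (s * y j)) + \<psi> (s * y j) / \<Psi> (s * y j) * (t * y j - s * y j)"
      by (rule lnPsi_tangent[OF PS])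
    moreover have "\<psi> (s * y j) / \<Psi> (s * y j) * (t * y j - s * y j) = F j s * (t - s)"
      using F_def by (simp add: algebra_simps)
    ultimately show ?thesis by (simp add: gg_def)
  qed
  have JJ': "JJ u = 1/2 * (u \<bullet> (M *v u)) - (\<Sum>k\<in>Z'. gg k (u $ k))" for u
    using JJ_def by (simp add: gg_def M_def)
  note crit = opt_crit[OF Mf(3) Mf(4) gder gtan JJ']
  note strict = opt_strict[OF Mf(3) Mf(4) gder gtan JJ']
  define gg2 where "gg2 = (\<lambda>k s. gg (\<iota> k) s)"
  have JJ'': "JJ' b = 1/2 * (b \<bullet> (M' *v b)) - (\<Sum>k\<in>UNIV. gg2 k (b $ k))" for b
    using JJ'_def by (simp add: gg_def gg2_def M'_def \<iota>_def)
  have gder2: "(gg2 k has_real_derivative F (\<iota> k) s) (at s)" for k s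
    unfolding gg2_def by (rule gder)
  have gtan2: "gg2 k t \<le> gg2 k s + F (\<iota> k) s * (t - s)" for k s t
    unfolding gg2_def by (rule gtan)
  note crit2 = opt_crit[OF M'f(3) M'f(4) gder2 gtan2 JJ'']
  have F'b: "F' b = (\<chi> i. if i \<in> UNIV then F (\<iota> i) (b $ i) else 0)" for b
    using F'_def by (simp add: \<iota>_def)
  define ub where "ub = (\<lambda>b. \<Sum>j\<in>Z'. (M' *v b) $ \<pi> j *\<^sub>R column j C)"
  have ub_C: "ub b = C *v emb (M' *v b)" for b
  proof -
    have "C *v emb (M' *v b) = (\<Sum>i\<in>UNIV. (if i \<in> Z' then (M' *v b) $ \<pi> i *\<^sub>R column i C else 0))"
    proof -
      have ms: "C *v z = (\<Sum>i\<in>UNIV. z $ i *\<^sub>R column i C)" for z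
        by (simp add: matrix_mult_sum scalar_mult_eq_scaleR)
      show ?thesis unfolding ms[of "emb (M' *v b)"] by (rule sum.cong) (auto simp: emb_def)
    qed
    also have "\<dots> = (\<Sum>i\<in>UNIV \<inter> Z'. (M' *v b) $ \<pi> i *\<^sub>R column i C)"
      using sum.inter_restrict[of "UNIV::'n set" "\<lambda>i. (M' *v b) $ \<pi> i *\<^sub>R column i C" Z'] by simp
    finally show ?thesis by (simp add: ub_def)
  qed
  have ub_i: "ub b $ \<iota> k = b $ k" for b k
  proof -
    have "ub b $ \<iota> k = (C' *v (M' *v b)) $ k" by (simp add: ub_C E)
    also have "\<dots> = b $ k" using M'f(1) by (simp add: matrix_vector_mul_assoc)
    finally show ?thesis .
  qed
  have ub_crit: "M *v ub b = (\<chi> i. if i \<in> Z' then F i (ub b $ i) else 0)" if fp: "M' *v b = F' b" for b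
  proof -
    have "M *v ub b = emb (M' *v b)" using Mf(2) by (simp add: ub_C matrix_vector_mul_assoc)
    also have "\<dots> = (\<chi> i. if i \<in> Z' then F i (ub b $ i) else 0)"
    proof -
      have "emb (M' *v b) $ i = (if i \<in> Z' then F i (ub b $ i) else 0)" for i
      proof (cases "i \<in> Z'")
        case True
        have "emb (M' *v b) $ i = F' b $ \<pi> i" using True fp by (simp add: emb_def)
        also have "\<dots> = F (\<iota> (\<pi> i)) (b $ \<pi> i)" by (simp add: F'b)
        also have "\<dots> = F i (ub b $ i)" using ub_i[of b "\<pi> i"] i_pi[OF True] by simp
        finally show ?thesis using True by simp
      qed (simp add: emb_def)
      thus ?thesis by (simp add: vec_eq_iff)
    qed
    finally show ?thesis .
  qed
  have crit_fp: "\<exists>b. M' *v b = F' b \<and> u = ub b"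
    if cu: "M *v u = (\<chi> i. if i \<in> Z' then F i (u $ i) else 0)" for u
  proof -
    define a where "a = (\<chi> i. if i \<in> Z' then F i (u $ i) else 0)"
    define b where "b = (\<chi> k. u $ \<iota> k)"
    have u_Ca: "u = C *v a"
    proof -
      have "C *v a = (C ** M) *v u" by (simp add: cu a_def matrix_vector_mul_assoc[symmetric])
      thus ?thesis using Mf(1) by simp
    qed
    have emb_a: "emb (F' b) = a"
    proof -
      have "emb (F' b) $ i = a $ i" for i
        by (cases "i \<in> Z'") (simp_all add: emb_def F'b a_def b_def i_pi)
      thus ?thesis by (simp add: vec_eq_iff)
    qed
    have b_eq: "b = C' *v F' b"
    proof -
      have "b $ k = (C' *v F' b) $ k" for k
      proof -
        have "b $ k = (C *v a) $ \<iota> k" using u_Ca by (simp add: b_def)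
        also have "\<dots> = (C' *v F' b) $ k" using E[of "F' b" k] emb_a by simp
        finally show ?thesis .
      qed
      thus ?thesis by (simp add: vec_eq_iff)
    qed
    have fp: "M' *v b = F' b"
    proof -
      have "M' *v b = (M' ** C') *v F' b" using b_eq by (metis matrix_vector_mul_assoc)
      thus ?thesis using M'f(2) by simp
    qed
    have "ub b = C *v emb (F' b)" by (simp add: ub_C fp)
    also have "\<dots> = u" using emb_a u_Ca by simp
    finally show ?thesis using fp by metis
  qed
  have P1: "(\<forall>v. JJ u \<le> JJ v) \<longleftrightarrow> (\<exists>b. M' *v b = F' b \<and> u = ub b)" for u
  proof
    assume "\<forall>v. JJ u \<le> JJ v"
    hence "M *v u = (\<chi> i. if i \<in> Z' then F i (u $ i) else 0)" using crit by blast
    thus "\<exists>b. M' *v b = F' b \<and> u = ub b" by (rule crit_fp)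
  next
    assume "\<exists>b. M' *v b = F' b \<and> u = ub b"
    then obtain b where "M' *v b = F' b" "u = ub b" by blast
    thus "\<forall>v. JJ u \<le> JJ v" using crit ub_crit by blast
  qed
  have P2: "u = ub b \<and> (\<forall>k. b $ k = u $ \<iota> k)" if mn: "\<forall>v. JJ u \<le> JJ v" and fp: "M' *v b = F' b" for u b
  proof -
    have cb: "M *v ub b = (\<chi> i. if i \<in> Z' then F i (ub b $ i) else 0)" by (rule ub_crit[OF fp])
    have "u = ub b"
    proof (rule ccontr)
      assume "u \<noteq> ub b"
      hence "JJ (ub b) < JJ u" using strict[OF cb] by blast
      thus False using mn by (meson not_le)
    qed
    thus ?thesis using ub_i by simp
  qed
  have P3: "M' *v b = F' b \<longleftrightarrow> (\<forall>v. JJ' b \<le> JJ' v)" for b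
    using crit2[of b] F'b[of b] by simp
  show ?thesis
    using P1 P2 P3 unfolding ub_def M'_def M_def \<iota>_def by blast
qed

end
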